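(* Let $n\ge 2$, $d\ge 1$, $\sigma>0$ and $\alpha\in(0,1)$, and consider the homoscedastic model, i.e. $\sigma_1=\dots=\sigma_n=\sigma$ (so that also $\sigma^\#_i=\sigma$ for all $i$). Let $\hat\pi$ be any one of the four estimators $\pi^{\mathrm{gr}}$, $\pi^{\mathrm{LSS}}$, $\pi^{\mathrm{LSNS}}$, $\pi^{\mathrm{LSL}}$. Then $$\bar\kappa_\alpha(\hat\pi)\le 4\max\Big\{\Big(2\log\frac{8n^2}{\alpha}\Big)^{1/2},\ \Big(d\log\frac{4n^2}{\alpha}\Big)^{1/4}\Big\}.$$
   Context: Model: integers $n\ge2$, $d\ge1$. Unknown parameters: $\boldsymbol\theta=(\theta_1,\dots,\theta_n)$ with $\theta_i\in\mathbb R^d$, noise levels $\boldsymbol\sigma=(\sigma_1,\dots,\sigma_n)$ with $\sigma_i>0$, and a permutation $\pi^*\in\mathfrak S_n$ (the symmetric group on $\{1,\dots,n\}$). One observes $$X_i=\theta_i+\sigma_i\xi_i,\qquad X_i^\#=\theta_{\pi^*(i)}+\sigma_i^\#\xi_i^\#,\qquad i=1,\dots,n,$$ where $\sigma_i^\#=\sigma_{\pi^*(i)}$ and $\xi_1,\dots,\xi_n,\xi_1^\#,\dots,\xi_n^\#$ are i.i.d. $\mathcal N(0,I_d)$. The law of the data is denoted $\mathbf P_{\boldsymbol\theta,\boldsymbol\sigma,\pi^*}$ and its expectation $\mathbf E_{\boldsymbol\theta,\boldsymbol\sigma,\pi^*}$. An estimator is a measurable map from the data to $\mathfrak S_n$;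 in the definitions below, ties in argmins are broken arbitrarily (measurably). Estimators: the greedy estimator $\pi^{\mathrm{gr}}$ is defined by $\pi^{\mathrm{gr}}(1)=\arg\min_{j\in\{1,\dots,n\}}\|X_j-X_1^\#\|$ and, recursively for $i=2,\dots,n$, $\pi^{\mathrm{gr}}(i)=\arg\min_{j\notin\{\pi^{\mathrm{gr}}(1),\dots,\pi^{\mathrm{gr}}(i-1)\}}\|X_j-X_i^\#\|$. Further $\pi^{\mathrm{LSS}}=\arg\min_{\pi\in\mathfrak S_n}\sum_{i=1}^n\|X_{\pi(i)}-X_i^\#\|^2$, $\pi^{\mathrm{LSNS}}=\arg\min_{\pi\in\mathfrak S_n}\sum_{i=1}^n\frac{\|X_{\pi(i)}-X_i^\#\|^2}{\sigma_{\pi(i)}^2+(\sigma_i^\#)^2}$ (computed with the noise levels treated as known), $\pi^{\mathrm{LSL}}=\arg\min_{\pi\in\mathfrak S_n}\sum_{i=1}^n\log\|X_{\pi(i)}-X_i^\#\|^2$. Relative separation distance: $\bar\kappa(\boldsymbol\theta,\boldsymbol\sigma)=\min_{i\ne j}\frac{\|\theta_i-\theta_j\|}{(\sigma_i^2+\sigma_j^2)^{1/2}}$. Perceivable separation distance of an estimator $\hat\pi$ (for fixed $n,d,\boldsymbol\sigma$ and $\alpha\in(0,1)$): $$\bar\kappa_\alpha(\hat\pi)=\inf\Big\{\kappa>0:\ \max_{\pi\in\mathfrak S_n}\ \sup_{\boldsymbol\theta:\,\bar\kappa(\boldsymbol\theta,\boldsymbol\sigma)>\kappa}\mathbf P_{\boldsymbol\theta,\boldsymbol\sigma,\pi}(\hat\pi\ne\pi)\le\alpha\Big\}.$$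 *)

theory Defs
  imports "HOL-Probability.Probability" "HOL-Combinatorics.Permutations"
begin

text \<open>Indices: items are indexed by {..<n} (0-based version of 1..n), coordinates of
  vectors in R^d by {..<d}. A vector of R^d is a function nat => real (only the
  coordinates below d matter); a family of n vectors is a function nat => nat => real.\<close>

type_synonym vecs = "nat \<Rightarrow> nat \<Rightarrow> real"
type_synonym data = "vecs \<times> vecs"

definition vdist :: "nat \<Rightarrow> (nat \<Rightarrow> real) \<Rightarrow> (nat \<Rightarrow> real) \<Rightarrow> real" where
  "vdist d x y = sqrt (\<Sum>k<d. (x k - y k)^2)"

definition gauss_vec :: "nat \<Rightarrow> (nat \<Rightarrow> real) measure" where
  "gauss_vec d = PiM {..<d} (\<lambda>_. density lborel std_normal_density)"

definition noise :: "nat \<Rightarrow> nat \<Rightarrow> data measure" where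
  "noise n d = PiM {..<n} (\<lambda>_. gauss_vec d) \<Otimes>\<^sub>M PiM {..<n} (\<lambda>_. gauss_vec d)"

definition data_space :: "nat \<Rightarrow> nat \<Rightarrow> data measure" where
  "data_space n d = PiM {..<n} (\<lambda>_. PiM {..<d} (\<lambda>_. borel))
                    \<Otimes>\<^sub>M PiM {..<n} (\<lambda>_. PiM {..<d} (\<lambda>_. borel))"

definition obs :: "nat \<Rightarrow> nat \<Rightarrow> vecs \<Rightarrow> (nat \<Rightarrow> real) \<Rightarrow> (nat \<Rightarrow> nat) \<Rightarrow> data \<Rightarrow> data" where
  "obs n d \<theta> \<sigma> \<pi> \<omega> =
     ((\<lambda>i\<in>{..<n}. \<lambda>j\<in>{..<d}. \<theta> i j + \<sigma> i * fst \<omega> i j),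
      (\<lambda>i\<in>{..<n}. \<lambda>j\<in>{..<d}. \<theta> (\<pi> i) j + \<sigma> (\<pi> i) * snd \<omega> i j))"

definition err_prob :: "nat \<Rightarrow> nat \<Rightarrow> (data \<Rightarrow> nat \<Rightarrow> nat) \<Rightarrow> vecs \<Rightarrow> (nat \<Rightarrow> real)
    \<Rightarrow> (nat \<Rightarrow> nat) \<Rightarrow> real" where
  "err_prob n d est \<theta> \<sigma> \<pi> =
     measure (noise n d) {\<omega> \<in> space (noise n d). est (obs n d \<theta> \<sigma> \<pi> \<omega>) \<noteq> \<pi>}"

definition rel_sep :: "nat \<Rightarrow> nat \<Rightarrow> vecs \<Rightarrow> (nat \<Rightarrow> real) \<Rightarrow> real" where
  "rel_sep n d \<theta> \<sigma> =
     Min {vdist d (\<theta> i) (\<theta> j) / sqrt ((\<sigma> i)^2 + (\<sigma> j)^2) | i j. i < n \<and> j < n \<and> i \<noteq> j}"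

text \<open>Perceivable separation distance (infimum in the extended reals, so Inf {} = \<infinity>).\<close>
definition perc_sep :: "nat \<Rightarrow> nat \<Rightarrow> (nat \<Rightarrow> real) \<Rightarrow> real \<Rightarrow> (data \<Rightarrow> nat \<Rightarrow> nat) \<Rightarrow> ereal" where
  "perc_sep n d \<sigma> \<alpha> est =
     Inf {ereal \<kappa> | \<kappa>. \<kappa> > 0 \<and>
            (\<forall>\<pi>. \<pi> permutes {..<n} \<longrightarrow>
               (\<forall>\<theta>. rel_sep n d \<theta> \<sigma> > \<kappa> \<longrightarrow> err_prob n d est \<theta> \<sigma> \<pi> \<le> \<alpha>))}"

text \<open>The four estimators, as characterisations of their value p on data D = (X, X#)
  (any tie-breaking is allowed).\<close>

definition is_greedy :: "nat \<Rightarrow> nat \<Rightarrow> data \<Rightarrow> (nat \<Rightarrow> nat) \<Rightarrow> bool" where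
  "is_greedy n d D p \<longleftrightarrow> p permutes {..<n} \<and>
     (\<forall>i<n. \<forall>j<n. j \<notin> p ` {..<i} \<longrightarrow>
        vdist d (fst D (p i)) (snd D i) \<le> vdist d (fst D j) (snd D i))"

definition LSS_cost :: "nat \<Rightarrow> nat \<Rightarrow> data \<Rightarrow> (nat \<Rightarrow> nat) \<Rightarrow> real" where
  "LSS_cost n d D p = (\<Sum>i<n. (vdist d (fst D (p i)) (snd D i))^2)"

definition is_LSS :: "nat \<Rightarrow> nat \<Rightarrow> data \<Rightarrow> (nat \<Rightarrow> nat) \<Rightarrow> bool" where
  "is_LSS n d D p \<longleftrightarrow> p permutes {..<n} \<and>
     (\<forall>q. q permutes {..<n} \<longrightarrow> LSS_cost n d D p \<le> LSS_cost n d D q)"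

text \<open>sigma: noise levels of the X_i; sigs: noise levels sigma#_i of the X#_i (treated as known).\<close>
definition LSNS_cost :: "nat \<Rightarrow> nat \<Rightarrow> (nat \<Rightarrow> real) \<Rightarrow> (nat \<Rightarrow> real) \<Rightarrow> data \<Rightarrow> (nat \<Rightarrow> nat) \<Rightarrow> real" where
  "LSNS_cost n d \<sigma> sigs D p =
     (\<Sum>i<n. (vdist d (fst D (p i)) (snd D i))^2 / ((\<sigma> (p i))^2 + (sigs i)^2))"

definition is_LSNS :: "nat \<Rightarrow> nat \<Rightarrow> (nat \<Rightarrow> real) \<Rightarrow> (nat \<Rightarrow> real) \<Rightarrow> data \<Rightarrow> (nat \<Rightarrow> nat) \<Rightarrow> bool" where
  "is_LSNS n d \<sigma> sigs D p \<longleftrightarrow> p permutes {..<n} \<and>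
     (\<forall>q. q permutes {..<n} \<longrightarrow> LSNS_cost n d \<sigma> sigs D p \<le> LSNS_cost n d \<sigma> sigs D q)"

definition ext_ln :: "real \<Rightarrow> ereal" where
  "ext_ln x = (if x = 0 then -\<infinity> else ereal (ln x))"

definition LSL_cost :: "nat \<Rightarrow> nat \<Rightarrow> data \<Rightarrow> (nat \<Rightarrow> nat) \<Rightarrow> ereal" where
  "LSL_cost n d D p = (\<Sum>i<n. ext_ln ((vdist d (fst D (p i)) (snd D i))^2))"

definition is_LSL :: "nat \<Rightarrow> nat \<Rightarrow> data \<Rightarrow> (nat \<Rightarrow> nat) \<Rightarrow> bool" where
  "is_LSL n d D p \<longleftrightarrow> p permutes {..<n} \<and>
     (\<forall>q. q permutes {..<n} \<longrightarrow> LSL_cost n d D p \<le> LSL_cost n d D q)"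

end

theory Submission
  imports Defs
begin


abbreviation "N \<equiv> density lborel std_normal_density"

lemma nn_int_normal: "0 < s \<Longrightarrow> (\<integral>\<^sup>+x. ennreal (normal_density \<mu> s x) \<partial>lborel) = 1"
proof -
  assume s: "0 < s"
  interpret prob_space "density lborel (normal_density \<mu> s)" using prob_space_normal_density s by auto
  have "emeasure (density lborel (normal_density \<mu> s)) UNIV = 1" using emeasure_space_1 by simp
  thus ?thesis by (simp add: emeasure_density)
qed

lemma gauss_mgf:
  fixes a b :: real
  assumes a: "a < 1/2"
  shows "(\<integral>\<^sup>+x. ennreal (exp (a*x^2 + b*x)) \<partial>N) = ennreal (exp (b^2/(2*(1-2*a))) / sqrt(1-2*a))"
proof -
  define c where "c = 1 - 2*a"
  have c0: "c > 0" using a by (simp add: c_def)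
  define s where "s = 1 / sqrt c"
  define \<mu> where "\<mu> = b / c"
  have s0: "s > 0" using c0 by (simp add: s_def)
  have s2: "s^2 = 1/c" using c0 by (simp add: s_def power_divide)
  have e1: "- x\<^sup>2 / 2 + (a*x^2 + b*x) = b^2/(2*c) + (-(x - \<mu>)\<^sup>2/ (2 * s\<^sup>2))" for x
  proof -
    have "-(x - \<mu>)\<^sup>2/ (2 * s\<^sup>2) = -(x - \<mu>)\<^sup>2 * c / 2" using c0 by (simp add: s2)
    also have "\<dots> = - x\<^sup>2 / 2 + (a*x^2 + b*x) - b^2/(2*c)"
    proof -
      have aa: "a = (1-c)/2" by (simp add: c_def)
      show ?thesis using c0 unfolding \<mu>_def aa by (simp add: field_simps power2_eq_square)
    qed
    finally show ?thesis by simp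
  qed
  have pt: "std_normal_density x * exp (a*x^2 + b*x) = (exp (b^2/(2*c)) * s) * normal_density \<mu> s x" for x
  proof -
    have "exp (- x\<^sup>2 / 2) * exp (a*x^2 + b*x) = exp (b^2/(2*c)) * exp (-(x - \<mu>)\<^sup>2/ (2 * s\<^sup>2))"
      unfolding exp_add[symmetric] e1 ..
    moreover have "sqrt (2 * pi * s\<^sup>2) = sqrt (2 * pi) * s" using s0 by (simp add: real_sqrt_mult)
    ultimately show ?thesis unfolding std_normal_density_def normal_density_def using s0
      by (simp add: field_simps)
  qed
  have "(\<integral>\<^sup>+x. ennreal (exp (a*x^2 + b*x)) \<partial>N) = (\<integral>\<^sup>+x. ennreal (std_normal_density x) * ennreal (exp (a*x^2 + b*x)) \<partial>lborel)"
    by (subst nn_integral_density) auto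
  also have "\<dots> = (\<integral>\<^sup>+x. ennreal (exp (b^2/(2*c)) * s) * ennreal (normal_density \<mu> s x) \<partial>lborel)"
    apply (rule nn_integral_cong)
    using s0 by (simp add: pt[symmetric] ennreal_mult'[symmetric] )
  also have "\<dots> = ennreal (exp (b^2/(2*c)) * s)"
    by (subst nn_integral_cmult) (auto simp: nn_int_normal s0)
  finally show ?thesis by (simp add: s_def c_def)
qed


lemma prob_N: "prob_space N" by (rule prob_space_normal_density) simp

lemma gv_prod:
  assumes "\<And>k. k < d \<Longrightarrow> g k \<in> borel_measurable borel"
  shows "(\<integral>\<^sup>+x. (\<Prod>k<d. g k (x k)) \<partial>gauss_vec d) = (\<Prod>k<d. \<integral>\<^sup>+t. g k t \<partial>N)"
proof -
  interpret product_sigma_finite "\<lambda>_::nat. N"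
    by (simp add: product_sigma_finite_def prob_space_imp_sigma_finite prob_N)
  show ?thesis unfolding gauss_vec_def
    by (rule product_nn_integral_prod) (simp_all add: assms)
qed

lemma comp1:
  assumes "prob_space M" "i \<in> I" "f \<in> borel_measurable M"
  shows "(\<integral>\<^sup>+\<omega>. f (\<omega> i) \<partial>PiM I (\<lambda>_. M)) = (\<integral>\<^sup>+x. f x \<partial>M)"
proof -
  have d: "distr (PiM I (\<lambda>_. M)) M (\<lambda>\<omega>. \<omega> i) = M"
    by (rule distr_PiM_component) (use assms in auto)
  have "(\<integral>\<^sup>+x. f x \<partial>M) = (\<integral>\<^sup>+x. f x \<partial>distr (PiM I (\<lambda>_. M)) M (\<lambda>\<omega>. \<omega> i))" by (simp add: d)
  also have "\<dots> = (\<integral>\<^sup>+\<omega>. f (\<omega> i) \<partial>PiM I (\<lambda>_. M))"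
    by (rule nn_integral_distr) (simp_all add: d assms measurable_component_singleton)
  finally show ?thesis ..
qed

lemma comp2:
  assumes M: "prob_space M" and I: "finite I" "j \<in> I" "m \<in> I" "j \<noteq> m"
    and f[measurable]: "(\<lambda>(x,y). f x y) \<in> borel_measurable (M \<Otimes>\<^sub>M M)"
  shows "(\<integral>\<^sup>+\<omega>. f (\<omega> j) (\<omega> m) \<partial>PiM I (\<lambda>_. M)) = (\<integral>\<^sup>+x. \<integral>\<^sup>+y. f x y \<partial>M \<partial>M)"
proof -
  interpret product_sigma_finite "\<lambda>_::'i. M"
    by (simp add: product_sigma_finite_def prob_space_imp_sigma_finite M)
  interpret sigma_finite_measure M using prob_space_imp_sigma_finite[OF M] .
  have Ieq: "I = insert m (I - {m})" using I by auto
  have "(\<integral>\<^sup>+\<omega>. f (\<omega> j) (\<omega> m) \<partial>PiM I (\<lambda>_. M)) = (\<integral>\<^sup>+\<omega>. f (\<omega> j) (\<omega> m) \<partial>PiM (insert m (I - {m})) (\<lambda>_. M))"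
    by (simp only: Ieq[symmetric])
  also have "\<dots> = (\<integral>\<^sup>+\<omega>. (\<integral>\<^sup>+y. f ((fun_upd \<omega> m y) j) ((fun_upd \<omega> m y) m) \<partial>M) \<partial>PiM (I - {m}) (\<lambda>_. M))"
  proof -
    have fin: "finite (I - {m})" using I by simp
    have nm: "m \<notin> I - {m}" by simp
    have "(\<lambda>\<omega>. (\<omega> j, \<omega> m)) \<in> measurable (PiM I (\<lambda>_. M)) (M \<Otimes>\<^sub>M M)"
      using I by (intro measurable_Pair measurable_component_singleton) auto
    from measurable_comp[OF this f]
    have "(\<lambda>\<omega>. f (\<omega> j) (\<omega> m)) \<in> borel_measurable (PiM I (\<lambda>_. M))" by (simp add: comp_def)
    then have meas: "(\<lambda>\<omega>. f (\<omega> j) (\<omega> m)) \<in> borel_measurable (PiM (insert m (I - {m})) (\<lambda>_. M))"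
      by (simp only: Ieq[symmetric])
    show ?thesis using product_nn_integral_insert[OF fin nm meas] .
  qed
  also have "\<dots> = (\<integral>\<^sup>+\<omega>. (\<lambda>x. \<integral>\<^sup>+y. f x y \<partial>M) (\<omega> j) \<partial>PiM (I - {m}) (\<lambda>_. M))"
  proof -
    have e: "\<And>\<omega> y. (fun_upd \<omega> m y) j = \<omega> j" "\<And>\<omega> y. (fun_upd \<omega> m y) m = y" using I(4) by simp_all
    show ?thesis by (simp only: e)
  qed
  also have "\<dots> = (\<integral>\<^sup>+x. \<integral>\<^sup>+y. f x y \<partial>M \<partial>M)"
    using I by (intro comp1[OF M _ borel_measurable_nn_integral[OF f]]) simp
  finally show ?thesis .
qed


lemma gauss_mgf_c:
  fixes a b K M :: real
  assumes a: "a < 1/2" and M: "0 \<le> M" and E: "\<And>x. E x = K + a*x^2 + b*x"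
  shows "(\<integral>\<^sup>+x. ennreal (M * exp (E x)) \<partial>N) = ennreal (M * exp (K + b^2/(2*(1-2*a))) / sqrt(1-2*a))"
proof -
  have "(\<integral>\<^sup>+x. ennreal (M * exp (E x)) \<partial>N) = (\<integral>\<^sup>+x. ennreal (M * exp K) * ennreal (exp (a*x^2 + b*x)) \<partial>N)"
    by (rule nn_integral_cong) (simp add: E exp_add[symmetric] ennreal_mult'[symmetric] M add.assoc mult.assoc)
  also have "\<dots> = ennreal (M * exp K) * (\<integral>\<^sup>+x. ennreal (exp (a*x^2 + b*x)) \<partial>N)"
    by (rule nn_integral_cmult) simp
  also have "\<dots> = ennreal (M * exp K) * ennreal (exp (b^2/(2*(1-2*a))) / sqrt(1-2*a))"
    by (simp only: gauss_mgf[OF a])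
  also have "\<dots> = ennreal (M * exp (K + b^2/(2*(1-2*a))) / sqrt(1-2*a))"
    by (subst ennreal_mult[symmetric]) (use a in \<open>auto simp: M exp_add mult.assoc\<close>)
  finally show ?thesis .
qed

lemma s_sq: "0 < s \<Longrightarrow> s \<le> 1/8 \<Longrightarrow> (s::real)^2 \<le> 1/64"
proof -
  assume "0 < s" "s \<le> 1/8"
  hence "s * s \<le> (1/8) * (1/8)" by (intro mult_mono) auto
  thus ?thesis by (simp add: power2_eq_square)
qed

definition P1 :: "real \<Rightarrow> real \<Rightarrow> real \<Rightarrow> real \<Rightarrow> real" where
  "P1 s r a c = exp (-s*(r+a-c)^2 + s*c^2 + 2* s^2*c^2/(1-2* s)) / sqrt (1-2* s)"
definition P2 :: "real \<Rightarrow> real \<Rightarrow> real \<Rightarrow> real" where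
  "P2 s r c = exp (-s*(r-c)^2 + s*c^2 + 2* s^2*c^2/(1-2* s) + 2* s^2*(r-c)^2/(1+2* s)) / (sqrt (1-2* s) * sqrt (1+2* s))"

lemma step_y:
  assumes "0 < s" "s < 1/2"
  shows "(\<integral>\<^sup>+b. ennreal (exp (-s*((r+a-c)^2 - (b-c)^2))) \<partial>N) = ennreal (P1 s r a c)"
proof -
  have "(\<integral>\<^sup>+b. ennreal (exp (-s*((r+a-c)^2 - (b-c)^2))) \<partial>N) = (\<integral>\<^sup>+b. ennreal (1 * exp (-s*((r+a-c)^2 - (b-c)^2))) \<partial>N)" by simp
  also have "\<dots> = ennreal (1 * exp ((-s*(r+a-c)^2 + s*c^2) + (-2* s*c)^2/(2*(1-2* s))) / sqrt(1-2* s))"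
    by (rule gauss_mgf_c) (use assms in \<open>auto simp: power2_eq_square algebra_simps\<close>)
  also have "\<dots> = ennreal (P1 s r a c)"
  proof -
    have "(-2* s*c)^2/(2*(1-2* s)) = 2* s^2*c^2/(1-2* s)" using assms by (simp add: power2_eq_square field_simps)
    thus ?thesis unfolding P1_def by (simp add: add.assoc)
  qed
  finally show ?thesis .
qed

lemma step_x:
  assumes "0 < s" "s < 1/2"
  shows "(\<integral>\<^sup>+a. ennreal (P1 s r a c) \<partial>N) = ennreal (P2 s r c)"
proof -
  have "(\<integral>\<^sup>+a. ennreal (P1 s r a c) \<partial>N) = (\<integral>\<^sup>+a. ennreal ((1/sqrt (1-2* s)) * exp (-s*(r+a-c)^2 + s*c^2 + 2* s^2*c^2/(1-2* s))) \<partial>N)"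
    by (simp add: P1_def)
  also have "\<dots> = ennreal ((1/sqrt (1-2* s)) * exp ((-s*(r-c)^2 + s*c^2 + 2* s^2*c^2/(1-2* s)) + (-2* s*(r-c))^2/(2*(1-2*(-s)))) / sqrt(1-2*(-s)))"
    by (rule gauss_mgf_c) (use assms in \<open>auto simp: power2_eq_square algebra_simps\<close>)
  also have "\<dots> = ennreal (P2 s r c)"
  proof -
    have "(-2* s*(r-c))^2/(2*(1-2*(-s))) = 2* s^2*(r-c)^2/(1+2* s)" using assms by (simp add: power2_eq_square field_simps)
    thus ?thesis unfolding P2_def by (simp add: add.assoc)
  qed
  finally show ?thesis .
qed

lemma step_z:
  assumes s: "0 < s" "s \<le> 1/8"
  shows "(\<integral>\<^sup>+c. ennreal (P2 s r c) \<partial>N) \<le> ennreal (exp (8* s^2 - s*r^2/2))"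
proof -
  define A where "A = s/(1-2* s) - s/(1+2* s)"
  define B where "B = 2* s*r/(1+2* s)"
  define K where "K = - s*r^2/(1+2* s)"
  define M where "M = 1 / (sqrt (1-2* s) * sqrt (1+2* s))"
  have s2: "1 - 2* s > 0" "1 + 2* s > 0" using s by auto
  have Aeq: "A = 4* s^2/(1-4* s^2)" using s2 unfolding A_def by (simp add: field_simps power2_eq_square)
  have s4: "1 - 4* s^2 > 0"
  proof -
    have "s^2 \<le> 1/64" using s by (rule s_sq)
    thus ?thesis by simp
  qed
  have A2: "1 - 2*A = (1 - 12* s^2)/(1-4* s^2)" using s4 unfolding Aeq by (simp add: field_simps)
  have s12: "1 - 12* s^2 > 0"
  proof -
    have "s^2 \<le> 1/64" using s by (rule s_sq)
    thus ?thesis by simp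
  qed
  have Ahalf: "A < 1/2"
  proof -
    have "0 < 1 - 2*A" unfolding A2 using s12 s4 by simp
    thus ?thesis by simp
  qed
  have "(\<integral>\<^sup>+c. ennreal (P2 s r c) \<partial>N) = (\<integral>\<^sup>+c. ennreal (M * exp (-s*(r-c)^2 + s*c^2 + 2* s^2*c^2/(1-2* s) + 2* s^2*(r-c)^2/(1+2* s))) \<partial>N)"
    by (simp add: P2_def M_def)
  also have "\<dots> = ennreal (M * exp (K + B^2/(2*(1-2*A))) / sqrt (1-2*A))"
  proof (rule gauss_mgf_c[OF Ahalf])
    show "0 \<le> M" unfolding M_def using s2 by simp
    fix x
    show "-s*(r-x)^2 + s*x^2 + 2* s^2*x^2/(1-2* s) + 2* s^2*(r-x)^2/(1+2* s) = K + A*x^2 + B*x"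
    proof -
      have h1: "s*x^2 + 2* s^2*x^2/(1-2* s) = s*x^2/(1-2* s)" using s2 by (simp add: field_simps power2_eq_square)
      have h2: "-s*(r-x)^2 + 2* s^2*(r-x)^2/(1+2* s) = -s*(r-x)^2/(1+2* s)" using s2 by (simp add: field_simps power2_eq_square)
      have h3: "s*x^2/(1-2* s) + -s*(r-x)^2/(1+2* s) = K + A*x^2 + B*x"
        unfolding K_def A_def B_def by (simp add: power2_eq_square diff_divide_distrib add_divide_distrib algebra_simps)
      show ?thesis using h1 h2 h3 by linarith
    qed
  qed
  also have "\<dots> \<le> ennreal (exp (8* s^2 - s*r^2/2))"
  proof (rule ennreal_leI)
    have ex: "K + B^2/(2*(1-2*A)) = r^2 * ((2* s^2*(1-2* s)/(1-12* s^2) - s)/(1+2* s))"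
    proof -
      have nz: "1 + 2* s \<noteq> 0" "1 - 12* s^2 \<noteq> 0" "1 - 4* s^2 \<noteq> 0" "1 - 2* s \<noteq> 0" using s2 s4 s12 by auto
      have f4: "1 - 4* s^2 = (1-2* s)*(1+2* s)" by (simp add: algebra_simps power2_eq_square)
      have "B^2/(2*(1-2*A)) = (2* s*r)^2 * (1-4* s^2) / ((1+2* s)^2 * (2*(1-12* s^2)))"
        unfolding A2 B_def using nz by (simp add: power_divide)
      also have "\<dots> = (2* s*r)^2 * (1-2* s) / ((1+2* s) * (2*(1-12* s^2)))"
        unfolding f4 using nz by (simp add: power2_eq_square)
      also have "\<dots> = 2* s^2*r^2*(1-2* s)/((1+2* s)*(1-12* s^2))"
      proof -
        have u: "(2* s*r)^2 * (1-2* s) = 2*(2* s^2*r^2*(1-2* s))" by (simp add: power2_eq_square)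
        have v: "(1+2* s) * (2*(1-12* s^2)) = 2*((1+2* s)*(1-12* s^2))" by simp
        show ?thesis unfolding u v by (rule mult_divide_mult_cancel_left) simp
      qed
      finally have e: "B^2/(2*(1-2*A)) = 2* s^2*r^2*(1-2* s)/((1+2* s)*(1-12* s^2))" .
      have g: "r^2 * ((2* s^2*(1-2* s)/(1-12* s^2) - s)/(1+2* s)) = r^2*(2* s^2*(1-2* s))/((1-12* s^2)*(1+2* s)) - r^2* s/(1+2* s)"
        by (simp add: diff_divide_distrib right_diff_distrib divide_divide_eq_left)
      have g2: "r^2*(2* s^2*(1-2* s))/((1-12* s^2)*(1+2* s)) = 2* s^2*r^2*(1-2* s)/((1+2* s)*(1-12* s^2))"
        by (simp add: ac_simps)
      show ?thesis unfolding e K_def g g2 by simp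
    qed
    have co: "(2* s^2*(1-2* s)/(1-12* s^2) - s)/(1+2* s) \<le> - s/2"
    proof -
      have ssq: "s^2 \<le> 1/64" using s by (rule s_sq)
      have h4: "4* s \<le> 1 - 12* s^2" using s ssq by linarith
      have nn: "0 \<le> s*(1-2* s)" using s s2 by simp
      have eq: "2* s^2*(1-2* s)*2 = s*(1-2* s)*(4* s)" by (simp add: power2_eq_square algebra_simps)
      have h5: "2* s^2*(1-2* s)*2 \<le> s*(1-2* s)*(1 - 12* s^2)" unfolding eq by (rule mult_left_mono[OF h4 nn])
      have "2* s^2*(1-2* s)/(1-12* s^2) \<le> s*(1-2* s)/2"
        using h5 s12 by (simp add: pos_divide_le_eq)
      hence h6: "2* s^2*(1-2* s)/(1-12* s^2) - s \<le> -s*(1+2* s)/2" by (simp add: algebra_simps)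
      have "(2* s^2*(1-2* s)/(1-12* s^2) - s)/(1+2* s) \<le> (-s*(1+2* s)/2)/(1+2* s)"
        using divide_right_mono[OF h6, of "1+2* s"] s2 by linarith
      also have "\<dots> = - s/2" using s2 by (simp add: field_simps)
      finally show ?thesis .
    qed
    have e1: "exp (K + B^2/(2*(1-2*A))) \<le> exp (- s*r^2/2)"
      unfolding ex using mult_left_mono[OF co, of "r^2"] by (simp add: mult.commute)
    have pre: "M / sqrt (1-2*A) = 1 / sqrt (1 - 12* s^2)"
    proof -
      have "(1-2* s)*(1+2* s)*(1-2*A) = 1 - 12* s^2" unfolding A2 using s4 by (simp add: field_simps power2_eq_square)
      hence "sqrt (1-2* s) * sqrt (1+2* s) * sqrt (1-2*A) = sqrt (1 - 12* s^2)" by (simp add: real_sqrt_mult[symmetric])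
      thus ?thesis unfolding M_def by (simp add: field_simps)
    qed
    have e2: "1 / sqrt (1 - 12* s^2) \<le> exp (8* s^2)"
    proof -
      have "1 \<le> (1 + 16* s^2) * (1 - 12* s^2)"
      proof -
        have "s^2 \<le> 1/64" using s by (rule s_sq)
        hence "192* s^2* s^2 \<le> 4* s^2" by (simp add: mult_right_mono)
        thus ?thesis by (simp add: algebra_simps power2_eq_square)
      qed
      hence "1 / (1 - 12* s^2) \<le> 1 + 16* s^2" using s12 by (simp add: field_simps)
      also have "\<dots> \<le> exp (16* s^2)" by (rule exp_ge_add_one_self)
      finally have "1 / (1 - 12* s^2) \<le> exp (8* s^2)^2" by (simp add: exp_double[symmetric] power2_eq_square exp_add[symmetric])
      hence "sqrt (1 / (1 - 12* s^2)) \<le> sqrt (exp (8* s^2)^2)" by (rule real_sqrt_le_mono)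
      thus ?thesis by (simp add: real_sqrt_divide)
    qed
    have "M * exp (K + B^2/(2*(1-2*A))) / sqrt (1-2*A) = (M / sqrt (1-2*A)) * exp (K + B^2/(2*(1-2*A)))" by simp
    also have "\<dots> \<le> exp (8* s^2) * exp (- s*r^2/2)"
      unfolding pre using e1 e2 by (intro mult_mono) auto
    also have "\<dots> = exp (8* s^2 - s*r^2/2)" by (simp add: exp_add[symmetric])
    finally show "M * exp (K + B^2/(2*(1-2*A))) / sqrt (1-2*A) \<le> exp (8* s^2 - s*r^2/2)" .
  qed
  finally show ?thesis .
qed

definition Q1 :: "real \<Rightarrow> real \<Rightarrow> real" where
  "Q1 t c = exp (-t*c^2 + 2*t^2*c^2/(1+2*t)) / sqrt (1+2*t)"

lemma zstep_y:
  assumes "0 < t"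
  shows "(\<integral>\<^sup>+b. ennreal (exp (-t*(b-c)^2)) \<partial>N) = ennreal (Q1 t c)"
proof -
  have "(\<integral>\<^sup>+b. ennreal (exp (-t*(b-c)^2)) \<partial>N) = (\<integral>\<^sup>+b. ennreal (1 * exp (-t*(b-c)^2)) \<partial>N)" by simp
  also have "\<dots> = ennreal (1 * exp ((-t*c^2) + (2*t*c)^2/(2*(1-2*(-t)))) / sqrt(1-2*(-t)))"
    by (rule gauss_mgf_c) (use assms in \<open>auto simp: power2_eq_square algebra_simps\<close>)
  also have "\<dots> = ennreal (Q1 t c)"
  proof -
    have "(2*t*c)^2/(2*(1-2*(-t))) = 2*t^2*c^2/(1+2*t)" using assms by (simp add: power2_eq_square field_simps)
    thus ?thesis unfolding Q1_def by simp
  qed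
  finally show ?thesis .
qed

lemma Q1_le: "0 < t \<Longrightarrow> Q1 t c \<le> 1 / sqrt (1+2*t)"
proof -
  assume t: "0 < t"
  have "-t*c^2 + 2*t^2*c^2/(1+2*t) = -t*c^2/(1+2*t)" using t by (simp add: field_simps power2_eq_square)
  also have "\<dots> \<le> 0" using t by (simp add: divide_nonpos_pos)
  finally have "exp (-t*c^2 + 2*t^2*c^2/(1+2*t)) \<le> 1" by simp
  thus ?thesis unfolding Q1_def using t by (simp add: divide_right_mono)
qed



lemma prod_mono_enn:
  fixes f g :: "'a \<Rightarrow> ennreal"
  shows "(\<And>i. i\<in>A \<Longrightarrow> f i \<le> g i) \<Longrightarrow> prod f A \<le> prod g A"
  by (induct A rule: infinite_finite_induct) (auto intro!: mult_mono)

lemma prob_G: "prob_space (gauss_vec d)"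
  unfolding gauss_vec_def by (rule prob_space_PiM) (rule prob_N)

lemma prob_A: "prob_space (PiM {..<n} (\<lambda>_. gauss_vec d))"
  by (rule prob_space_PiM) (rule prob_G)

lemma prob_noise: "prob_space (noise n d)"
  unfolding noise_def by (intro prob_space_pair prob_A)

lemma mcomp_G[measurable]: "k \<in> {..<d} \<Longrightarrow> (\<lambda>x. x k) \<in> borel_measurable (gauss_vec d)"
proof -
  assume k: "k \<in> {..<d}"
  have "(\<lambda>x. x k) \<in> measurable (PiM {..<d} (\<lambda>_. N)) N" by (rule measurable_component_singleton[OF k])
  moreover have "measurable (PiM {..<d} (\<lambda>_. N)) N = measurable (PiM {..<d} (\<lambda>_. N)) borel"
    by (rule measurable_cong_sets) simp_all
  ultimately show ?thesis unfolding gauss_vec_def by simp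
qed

lemma mcomp_A[measurable]: "j \<in> {..<n} \<Longrightarrow> (\<lambda>a. a j) \<in> measurable (PiM {..<n} (\<lambda>_. gauss_vec d)) (gauss_vec d)"
  by (rule measurable_component_singleton)

lemma triple_int:
  fixes H :: "(nat \<Rightarrow> real) \<Rightarrow> (nat \<Rightarrow> real) \<Rightarrow> (nat \<Rightarrow> real) \<Rightarrow> ennreal"
  assumes ij: "j < n" "m < n" "i < n" "j \<noteq> m"
    and h1: "(\<lambda>\<omega>. H (fst \<omega> j) (fst \<omega> m) (snd \<omega> i)) \<in> borel_measurable (noise n d)"
    and h2: "\<And>z. (\<lambda>p. H (fst p) (snd p) z) \<in> borel_measurable (gauss_vec d \<Otimes>\<^sub>M gauss_vec d)"
    and h3: "\<And>z. (\<integral>\<^sup>+x. \<integral>\<^sup>+y. H x y z \<partial>gauss_vec d \<partial>gauss_vec d) = \<Phi> z"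
    and h4: "\<Phi> \<in> borel_measurable (gauss_vec d)"
  shows "(\<integral>\<^sup>+\<omega>. H (fst \<omega> j) (fst \<omega> m) (snd \<omega> i) \<partial>noise n d) = (\<integral>\<^sup>+z. \<Phi> z \<partial>gauss_vec d)"
proof -
  let ?A = "PiM {..<n} (\<lambda>_. gauss_vec d)"
  interpret pA: prob_space ?A by (rule prob_A)
  interpret pp: pair_sigma_finite ?A ?A
    by (simp add: pair_sigma_finite_def prob_space_imp_sigma_finite prob_A)
  have "(\<integral>\<^sup>+\<omega>. H (fst \<omega> j) (fst \<omega> m) (snd \<omega> i) \<partial>noise n d)
      = (\<integral>\<^sup>+b. \<integral>\<^sup>+a. H (a j) (a m) (b i) \<partial>?A \<partial>?A)"
    using pp.nn_integral_snd[OF h1[unfolded noise_def]] unfolding noise_def by simp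
  also have "\<dots> = (\<integral>\<^sup>+b. \<integral>\<^sup>+x. \<integral>\<^sup>+y. H x y (b i) \<partial>gauss_vec d \<partial>gauss_vec d \<partial>?A)"
  proof (rule nn_integral_cong)
    fix b
    have m2: "(\<lambda>(x,y). H x y (b i)) \<in> borel_measurable (gauss_vec d \<Otimes>\<^sub>M gauss_vec d)"
      using h2[of "b i"] by (simp add: case_prod_beta')
    show "(\<integral>\<^sup>+a. H (a j) (a m) (b i) \<partial>?A) = (\<integral>\<^sup>+x. \<integral>\<^sup>+y. H x y (b i) \<partial>gauss_vec d \<partial>gauss_vec d)"
      by (rule comp2[OF prob_G _ _ _ ij(4) m2]) (use ij in auto)
  qed
  also have "\<dots> = (\<integral>\<^sup>+b. \<Phi> (b i) \<partial>?A)" by (simp add: h3)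
  also have "\<dots> = (\<integral>\<^sup>+z. \<Phi> z \<partial>gauss_vec d)"
    by (rule comp1[OF prob_G _ h4]) (use ij in auto)
  finally show ?thesis .
qed



lemma P1_meas[measurable]: "(\<lambda>a. P1 s r a c) \<in> borel_measurable borel"
  unfolding P1_def by measurable
lemma P2_meas[measurable]: "(\<lambda>c. P2 s r c) \<in> borel_measurable borel"
  unfolding P2_def by measurable

lemma noise_fst: "j \<in> {..<n} \<Longrightarrow> k \<in> {..<d} \<Longrightarrow> (\<lambda>\<omega>. fst \<omega> j k) \<in> borel_measurable (noise n d)"
proof -
  assume j: "j \<in> {..<n}" and k: "k \<in> {..<d}"
  have "(\<lambda>\<omega>. fst \<omega> j) \<in> measurable (noise n d) (gauss_vec d)"
    unfolding noise_def by (rule measurable_compose[OF measurable_fst mcomp_A[OF j]])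
  from measurable_compose[OF this mcomp_G[OF k]] show ?thesis .
qed

lemma noise_snd: "j \<in> {..<n} \<Longrightarrow> k \<in> {..<d} \<Longrightarrow> (\<lambda>\<omega>. snd \<omega> j k) \<in> borel_measurable (noise n d)"
proof -
  assume j: "j \<in> {..<n}" and k: "k \<in> {..<d}"
  have "(\<lambda>\<omega>. snd \<omega> j) \<in> measurable (noise n d) (gauss_vec d)"
    unfolding noise_def by (rule measurable_compose[OF measurable_snd mcomp_A[OF j]])
  from measurable_compose[OF this mcomp_G[OF k]] show ?thesis .
qed

lemma pair_int:
  fixes r :: "nat \<Rightarrow> real"
  assumes ij: "j < n" "m < n" "i < n" "j \<noteq> m" and s: "0 < s" "s \<le> 1/8"
  shows "(\<integral>\<^sup>+\<omega>. (\<Prod>k<d. ennreal (exp (-s*((r k + fst \<omega> j k - snd \<omega> i k)^2 - (fst \<omega> m k - snd \<omega> i k)^2)))) \<partial>noise n d)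
     \<le> ennreal (exp (8 * real d * s^2 - s * (\<Sum>k<d. (r k)^2) / 2))"
proof -
  define H where "H = (\<lambda>x y z. (\<Prod>k<d. ennreal (exp (-s*((r k + (x::nat\<Rightarrow>real) k - z k)^2 - (y k - z k)^2)))))"
  define \<Phi> where "\<Phi> = (\<lambda>z. (\<Prod>k<d. ennreal (P2 s (r k) ((z::nat\<Rightarrow>real) k))))"
  have s2: "s < 1/2" using s by simp
  have fj[measurable]: "\<And>k. k \<in> {..<d} \<Longrightarrow> (\<lambda>\<omega>. fst \<omega> j k) \<in> borel_measurable (noise n d)"
    and fm[measurable]: "\<And>k. k \<in> {..<d} \<Longrightarrow> (\<lambda>\<omega>. fst \<omega> m k) \<in> borel_measurable (noise n d)"
    and si[measurable]: "\<And>k. k \<in> {..<d} \<Longrightarrow> (\<lambda>\<omega>. snd \<omega> i k) \<in> borel_measurable (noise n d)"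
    using ij by (auto intro: noise_fst noise_snd)
  have h1: "(\<lambda>\<omega>. H (fst \<omega> j) (fst \<omega> m) (snd \<omega> i)) \<in> borel_measurable (noise n d)"
    unfolding H_def by measurable
  have h2: "\<And>z. (\<lambda>p. H (fst p) (snd p) z) \<in> borel_measurable (gauss_vec d \<Otimes>\<^sub>M gauss_vec d)"
    unfolding H_def by measurable
  have h4: "\<Phi> \<in> borel_measurable (gauss_vec d)"
    unfolding \<Phi>_def by measurable
  have h3: "(\<integral>\<^sup>+x. \<integral>\<^sup>+y. H x y z \<partial>gauss_vec d \<partial>gauss_vec d) = \<Phi> z" for z
  proof -
    have inner: "(\<integral>\<^sup>+y. H x y z \<partial>gauss_vec d) = (\<Prod>k<d. ennreal (P1 s (r k) (x k) (z k)))" for x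
    proof -
      have "(\<integral>\<^sup>+y. H x y z \<partial>gauss_vec d) = (\<Prod>k<d. \<integral>\<^sup>+b. ennreal (exp (-s*((r k + x k - z k)^2 - (b - z k)^2))) \<partial>N)"
        unfolding H_def by (rule gv_prod) measurable
      also have "\<dots> = (\<Prod>k<d. ennreal (P1 s (r k) (x k) (z k)))"
        by (rule prod.cong[OF refl]) (rule step_y[OF s(1) s2])
      finally show ?thesis .
    qed
    have "(\<integral>\<^sup>+x. \<integral>\<^sup>+y. H x y z \<partial>gauss_vec d \<partial>gauss_vec d) = (\<integral>\<^sup>+x. (\<Prod>k<d. ennreal (P1 s (r k) (x k) (z k))) \<partial>gauss_vec d)"
      by (simp add: inner)
    also have "\<dots> = (\<Prod>k<d. \<integral>\<^sup>+a. ennreal (P1 s (r k) a (z k)) \<partial>N)"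
      by (rule gv_prod) measurable
    also have "\<dots> = \<Phi> z" unfolding \<Phi>_def
      by (rule prod.cong[OF refl]) (rule step_x[OF s(1) s2])
    finally show ?thesis .
  qed
  have "(\<integral>\<^sup>+\<omega>. H (fst \<omega> j) (fst \<omega> m) (snd \<omega> i) \<partial>noise n d) = (\<integral>\<^sup>+z. \<Phi> z \<partial>gauss_vec d)"
    by (rule triple_int[OF ij h1 h2 h3 h4])
  also have "\<dots> = (\<Prod>k<d. \<integral>\<^sup>+c. ennreal (P2 s (r k) c) \<partial>N)"
    unfolding \<Phi>_def by (rule gv_prod) measurable
  also have "\<dots> \<le> (\<Prod>k<d. ennreal (exp (8* s^2 - s*(r k)^2/2)))"
    by (rule prod_mono_enn) (rule step_z[OF s])
  also have "\<dots> = ennreal (\<Prod>k<d. exp (8* s^2 - s*(r k)^2/2))"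
    by (rule prod_ennreal) simp
  also have "\<dots> = ennreal (exp (\<Sum>k<d. (8* s^2 - s*(r k)^2/2)))"
    by (simp add: exp_sum)
  also have "(\<Sum>k<d. (8* s^2 - s*(r k)^2/2)) = 8 * real d * s^2 - s * (\<Sum>k<d. (r k)^2) / 2"
    by (simp add: sum_subtractf sum_divide_distrib[symmetric] sum_distrib_left[symmetric])
  finally show ?thesis unfolding H_def .
qed



lemma Q1_meas[measurable]: "(\<lambda>c. Q1 t c) \<in> borel_measurable borel"
  unfolding Q1_def by measurable

lemma zero_int:
  assumes ij: "j < n" "m < n" "i < n" "j \<noteq> m" and t: "0 < t" and d: "1 \<le> d"
  shows "(\<integral>\<^sup>+\<omega>. (\<Prod>k<d. ennreal (exp (-t*(fst \<omega> m k - snd \<omega> i k)^2))) \<partial>noise n d)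
     \<le> ennreal (1 / sqrt (1 + 2*t))"
proof -
  define H where "H = (\<lambda>(x::nat\<Rightarrow>real) y z. (\<Prod>k<d. ennreal (exp (-t*((y::nat\<Rightarrow>real) k - z k)^2))))"
  define \<Phi> where "\<Phi> = (\<lambda>z. (\<Prod>k<d. ennreal (Q1 t ((z::nat\<Rightarrow>real) k))))"
  interpret pG: prob_space "gauss_vec d" by (rule prob_G)
  have fm[measurable]: "\<And>k. k \<in> {..<d} \<Longrightarrow> (\<lambda>\<omega>. fst \<omega> m k) \<in> borel_measurable (noise n d)"
    and si[measurable]: "\<And>k. k \<in> {..<d} \<Longrightarrow> (\<lambda>\<omega>. snd \<omega> i k) \<in> borel_measurable (noise n d)"
    using ij by (auto intro: noise_fst noise_snd)
  have h1: "(\<lambda>\<omega>. H (fst \<omega> j) (fst \<omega> m) (snd \<omega> i)) \<in> borel_measurable (noise n d)"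
    unfolding H_def by measurable
  have h2: "\<And>z. (\<lambda>p. H (fst p) (snd p) z) \<in> borel_measurable (gauss_vec d \<Otimes>\<^sub>M gauss_vec d)"
    unfolding H_def by measurable
  have h4: "\<Phi> \<in> borel_measurable (gauss_vec d)"
    unfolding \<Phi>_def by measurable
  have h3: "(\<integral>\<^sup>+x. \<integral>\<^sup>+y. H x y z \<partial>gauss_vec d \<partial>gauss_vec d) = \<Phi> z" for z
  proof -
    have inner: "(\<integral>\<^sup>+y. H x y z \<partial>gauss_vec d) = \<Phi> z" for x
    proof -
      have "(\<integral>\<^sup>+y. H x y z \<partial>gauss_vec d) = (\<Prod>k<d. \<integral>\<^sup>+b. ennreal (exp (-t*(b - z k)^2)) \<partial>N)"
        unfolding H_def by (rule gv_prod) measurable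
      also have "\<dots> = \<Phi> z" unfolding \<Phi>_def
        by (rule prod.cong[OF refl]) (rule zstep_y[OF t])
      finally show ?thesis .
    qed
    show ?thesis by (simp add: inner pG.emeasure_space_1)
  qed
  have "(\<integral>\<^sup>+\<omega>. H (fst \<omega> j) (fst \<omega> m) (snd \<omega> i) \<partial>noise n d) = (\<integral>\<^sup>+z. \<Phi> z \<partial>gauss_vec d)"
    by (rule triple_int[OF ij h1 h2 h3 h4])
  also have "\<dots> \<le> (\<integral>\<^sup>+z. ennreal ((1 / sqrt (1 + 2*t))^d) \<partial>gauss_vec d)"
  proof (rule nn_integral_mono)
    fix z
    have "\<Phi> z \<le> (\<Prod>k<d. ennreal (1 / sqrt (1 + 2*t)))"
      unfolding \<Phi>_def by (rule prod_mono_enn) (simp add: Q1_le[OF t] ennreal_leI)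
    also have "\<dots> = ennreal ((1 / sqrt (1 + 2*t))^d)"
      using t by (simp add: prod_ennreal ennreal_power)
    finally show "\<Phi> z \<le> ennreal ((1 / sqrt (1 + 2*t))^d)" .
  qed
  also have "\<dots> = ennreal ((1 / sqrt (1 + 2*t))^d)" by (simp add: pG.emeasure_space_1)
  also have "\<dots> \<le> ennreal (1 / sqrt (1 + 2*t))"
  proof (rule ennreal_leI)
    have "(1 / sqrt (1 + 2*t))^d \<le> (1 / sqrt (1 + 2*t))^1"
      by (rule power_decreasing) (use d t in auto)
    thus "(1 / sqrt (1 + 2*t))^d \<le> 1 / sqrt (1 + 2*t)" by simp
  qed
  finally show ?thesis unfolding H_def by simp
qed



lemma markov_exp:
  assumes F[measurable]: "F \<in> borel_measurable M" and c: "0 \<le> c"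
  shows "emeasure M {\<omega>\<in>space M. F \<omega> \<le> 0} \<le> (\<integral>\<^sup>+\<omega>. ennreal (exp (-c * F \<omega>)) \<partial>M)"
proof -
  have S: "{\<omega>\<in>space M. F \<omega> \<le> 0} \<in> sets M" by measurable
  have "emeasure M {\<omega>\<in>space M. F \<omega> \<le> 0} = (\<integral>\<^sup>+\<omega>. indicator {\<omega>\<in>space M. F \<omega> \<le> 0} \<omega> \<partial>M)"
    using S by simp
  also have "\<dots> \<le> (\<integral>\<^sup>+\<omega>. ennreal (exp (-c * F \<omega>)) \<partial>M)"
  proof (rule nn_integral_mono)
    fix \<omega> assume "\<omega> \<in> space M"
    show "indicator {\<omega>\<in>space M. F \<omega> \<le> 0} \<omega> \<le> ennreal (exp (-c * F \<omega>))"
    proof (cases "F \<omega> \<le> 0")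
      case True
      hence "0 \<le> -c * F \<omega>" using c by (simp add: mult_nonneg_nonpos)
      hence "1 \<le> exp (-c * F \<omega>)" by simp
      thus ?thesis by (simp add: indicator_def ennreal_leI)
    qed (simp add: indicator_def)
  qed
  finally show ?thesis .
qed

lemma expo_bound:
  fixes Rr B La Lb Lc d :: real
  assumes d: "1 \<le> d" and Rr: "2*B^2 < Rr" and B1: "32*Lb \<le> B^2" and B2: "256*d*Lc \<le> B^4"
    and L: "La \<le> Lb" "La \<le> Lc" "0 \<le> La"
  shows "\<exists>s. 0 < s \<and> s \<le> 1/8 \<and> 8*d* s^2 - s*Rr/2 \<le> -La"
proof (cases "Rr/(32*d) \<le> 1/8")
  case True
  define s where "s = Rr/(32*d)"
  have Rp: "0 < Rr" using Rr by (smt (verit) zero_le_power2)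
  have sp: "0 < s" using Rp d by (simp add: s_def)
  have "8*d* s^2 - s*Rr/2 = -(Rr^2)/(128*d)" using d unfolding s_def by (simp add: field_simps power2_eq_square)
  also have "\<dots> \<le> -La"
  proof -
    have "(2*B^2)^2 \<le> Rr^2" using Rr by (intro power_mono) auto
    hence "4*B^4 \<le> Rr^2" by (simp add: power_mult_distrib power2_eq_square power4_eq_xxxx mult_ac)
    hence "1024*d*Lc \<le> Rr^2" using B2 by linarith
    moreover have "d*La \<le> d*Lc" using L d by (intro mult_left_mono) auto
    moreover have "0 \<le> d*La" using L d by simp
    ultimately have "128*(d*La) \<le> Rr^2" by (simp add: mult.assoc)
    hence "128*d*La \<le> Rr^2" by (simp add: mult.assoc)
    thus ?thesis using d by (simp add: field_simps)
  qed
  finally show ?thesis using sp True unfolding s_def by auto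
next
  case False
  define s :: real where "s = 1/8"
  have "Rr > 4*d" using False d by (simp add: field_simps)
  have "8*d* s^2 - s*Rr/2 = d/8 - Rr/16" unfolding s_def by (simp add: power2_eq_square)
  also have "\<dots> \<le> -La" using \<open>Rr > 4*d\<close> Rr B1 L by linarith
  finally show ?thesis unfolding s_def by (intro exI[of _ "1/8"]) auto
qed



lemma perm_eq_ext:
  assumes "p permutes {..<n}" "\<pi> permutes {..<n}" "\<And>i. i < n \<Longrightarrow> p i = \<pi> i"
  shows "p = \<pi>"
proof
  fix x show "p x = \<pi> x"
  proof (cases "x < n")
    case True thus ?thesis using assms by auto
  next
    case False thus ?thesis using assms(1,2) by (simp add: permutes_def)
  qed
qed

lemma greedy_eq:
  fixes n :: nat and p \<pi> :: "nat \<Rightarrow> nat" and \<delta> :: "nat \<Rightarrow> nat \<Rightarrow> real"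
  assumes p: "p permutes {..<n}" and pi: "\<pi> permutes {..<n}"
    and sep: "\<forall>i<n. \<forall>j<n. j \<noteq> \<pi> i \<longrightarrow> \<delta> i (\<pi> i) < \<delta> i j"
    and gr: "\<forall>i<n. \<forall>j<n. j \<notin> p ` {..<i} \<longrightarrow> \<delta> i (p i) \<le> \<delta> i j"
  shows "p = \<pi>"
proof -
  have "\<forall>i. i < n \<longrightarrow> p i = \<pi> i"
  proof (rule allI, induct_tac i rule: less_induct)
    fix i assume IH: "\<And>l. l < i \<Longrightarrow> l < n \<longrightarrow> p l = \<pi> l"
    show "i < n \<longrightarrow> p i = \<pi> i"
    proof
      assume i: "i < n"
      have img: "p ` {..<i} = \<pi> ` {..<i}" using IH i by (auto intro!: image_cong)
      have "\<pi> i \<notin> \<pi> ` {..<i}"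
        using permutes_inj[OF pi] by (auto dest: injD)
      hence nin: "\<pi> i \<notin> p ` {..<i}" using img by simp
      have pin: "\<pi> i < n" using permutes_in_image[OF pi] i by simp
      have pin2: "p i < n" using permutes_in_image[OF p] i by simp
      have le: "\<delta> i (p i) \<le> \<delta> i (\<pi> i)" using gr i nin pin by blast
      show "p i = \<pi> i"
      proof (rule ccontr)
        assume "p i \<noteq> \<pi> i"
        hence "\<delta> i (\<pi> i) < \<delta> i (p i)" using sep i pin2 by blast
        with le show False by simp
      qed
    qed
  qed
  thus ?thesis using perm_eq_ext[OF p pi] by blast
qed

lemma sum_strict_perm:
  fixes g :: "nat \<Rightarrow> nat \<Rightarrow> real"
  assumes p: "p permutes {..<n}" and pi: "\<pi> permutes {..<n}" and ne: "p \<noteq> \<pi>"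
    and sep: "\<forall>i<n. \<forall>j<n. j \<noteq> \<pi> i \<longrightarrow> g i (\<pi> i) < g i j"
  shows "(\<Sum>i<n. g i (\<pi> i)) < (\<Sum>i<n. g i (p i))"
proof -
  obtain i where i: "i < n" "p i \<noteq> \<pi> i" using perm_eq_ext[OF p pi] ne by blast
  show ?thesis
  proof (rule sum_strict_mono_ex1)
    show "finite {..<n}" by simp
    show "\<forall>x\<in>{..<n}. g x (\<pi> x) \<le> g x (p x)"
    proof
      fix x assume x: "x \<in> {..<n}"
      have "p x < n" using permutes_in_image[OF p] x by simp
      thus "g x (\<pi> x) \<le> g x (p x)" using sep x by (cases "p x = \<pi> x") (auto intro: less_imp_le)
    qed
    have "p i < n" using permutes_in_image[OF p] i by simp
    thus "\<exists>a\<in>{..<n}. g a (\<pi> a) < g a (p a)" using sep i by auto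
  qed
qed

lemma all_estimators_eq:
  fixes D :: data and \<sigma> :: real and n d :: nat
  defines "\<delta> \<equiv> \<lambda>i j. vdist d (fst D j) (snd D i)"
  assumes p: "p permutes {..<n}" and pi: "\<pi> permutes {..<n}" and s: "\<sigma> > 0"
    and sep: "\<forall>i<n. \<forall>j<n. j \<noteq> \<pi> i \<longrightarrow> \<delta> i (\<pi> i) < \<delta> i j"
    and pos: "\<forall>i<n. 0 < \<delta> i (\<pi> i)"
    and est: "is_greedy n d D p \<or> is_LSS n d D p \<or> is_LSNS n d (\<lambda>_. \<sigma>) (\<lambda>_. \<sigma>) D p \<or> is_LSL n d D p"
  shows "p = \<pi>"
proof (rule ccontr)
  assume ne: "p \<noteq> \<pi>"
  have nn: "\<And>i j. 0 \<le> \<delta> i j" unfolding \<delta>_def vdist_def by (simp add: sum_nonneg)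
  have sep2: "\<forall>i<n. \<forall>j<n. j \<noteq> \<pi> i \<longrightarrow> (\<delta> i (\<pi> i))^2 < (\<delta> i j)^2"
    using sep pos by (auto intro!: power_strict_mono simp: nn)
  have LSS: "LSS_cost n d D \<pi> < LSS_cost n d D p"
    unfolding LSS_cost_def using sum_strict_perm[OF p pi ne sep2] unfolding \<delta>_def .
  consider "is_greedy n d D p" | "is_LSS n d D p" | "is_LSNS n d (\<lambda>_. \<sigma>) (\<lambda>_. \<sigma>) D p" | "is_LSL n d D p"
    using est by blast
  then show False
  proof cases
    case 1
    then have "p = \<pi>" using greedy_eq[OF p pi sep] unfolding is_greedy_def \<delta>_def by blast
    with ne show False ..
  next
    case 2 then show False using LSS pi unfolding is_LSS_def by fastforce
  next
    case 3
    have sep3: "\<forall>i<n. \<forall>j<n. j \<noteq> \<pi> i \<longrightarrow> (\<delta> i (\<pi> i))^2 / (\<sigma>^2 + \<sigma>^2) < (\<delta> i j)^2 / (\<sigma>^2 + \<sigma>^2)"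
      using sep2 s by (auto intro!: divide_strict_right_mono)
    have "LSNS_cost n d (\<lambda>_. \<sigma>) (\<lambda>_. \<sigma>) D \<pi> < LSNS_cost n d (\<lambda>_. \<sigma>) (\<lambda>_. \<sigma>) D p"
      unfolding LSNS_cost_def using sum_strict_perm[OF p pi ne sep3] unfolding \<delta>_def .
    then show False using 3 pi unfolding is_LSNS_def by fastforce
  next
    case 4
    have ppos: "\<forall>i<n. 0 < \<delta> i (p i)"
    proof (intro allI impI)
      fix i assume i: "i < n"
      have "p i < n" using permutes_in_image[OF p] i by simp
      thus "0 < \<delta> i (p i)" using sep pos i by (cases "p i = \<pi> i") (auto, meson less_trans)
    qed
    have eq: "\<And>q. q permutes {..<n} \<Longrightarrow> (\<forall>i<n. 0 < \<delta> i (q i)) \<Longrightarrow>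
       LSL_cost n d D q = ereal (\<Sum>i<n. ln ((\<delta> i (q i))^2))"
    proof -
      fix q assume q: "q permutes {..<n}" "\<forall>i<n. 0 < \<delta> i (q i)"
      have "LSL_cost n d D q = (\<Sum>i<n. ereal (ln ((\<delta> i (q i))^2)))"
        unfolding LSL_cost_def ext_ln_def \<delta>_def[symmetric]
        by (rule sum.cong) (use q in \<open>auto simp: \<delta>_def\<close>)
      also have "\<dots> = ereal (\<Sum>i<n. ln ((\<delta> i (q i))^2))" by (rule sum_ereal)
      finally show "LSL_cost n d D q = ereal (\<Sum>i<n. ln ((\<delta> i (q i))^2))" .
    qed
    have sep4: "\<forall>i<n. \<forall>j<n. j \<noteq> \<pi> i \<longrightarrow> ln ((\<delta> i (\<pi> i))^2) < ln ((\<delta> i j)^2)"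
    proof (intro allI impI)
      fix i j assume ij: "i < n" "j < n" "j \<noteq> \<pi> i"
      have a0: "0 < \<delta> i (\<pi> i)" using pos ij by blast
      have a: "0 < (\<delta> i (\<pi> i))^2" using a0 by simp
      have b: "(\<delta> i (\<pi> i))^2 < (\<delta> i j)^2" using sep2 ij by blast
      show "ln ((\<delta> i (\<pi> i))^2) < ln ((\<delta> i j)^2)" proof -
        have c: "0 < (\<delta> i j)^2" using a b by linarith
        show ?thesis using ln_less_cancel_iff[OF a c] b by blast
      qed
    qed
    have "(\<Sum>i<n. ln ((\<delta> i (\<pi> i))^2)) < (\<Sum>i<n. ln ((\<delta> i (p i))^2))"
      using sum_strict_perm[OF p pi ne sep4] .
    hence "LSL_cost n d D \<pi> < LSL_cost n d D p"
      using eq[OF pi pos] eq[OF p ppos] by simp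
    then show False using 4 pi unfolding is_LSL_def by fastforce
  qed
qed


definition dsq :: "nat \<Rightarrow> vecs \<Rightarrow> real \<Rightarrow> (nat \<Rightarrow> nat) \<Rightarrow> data \<Rightarrow> nat \<Rightarrow> nat \<Rightarrow> real" where
  "dsq d \<theta> \<sigma> \<pi> \<omega> i j = (\<Sum>k<d. (\<theta> j k + \<sigma> * fst \<omega> j k - (\<theta> (\<pi> i) k + \<sigma> * snd \<omega> i k))^2)"

lemma vdist_obs:
  assumes "i < n" "j < n"
  shows "vdist d (fst (obs n d \<theta> (\<lambda>_. \<sigma>) \<pi> \<omega>) j) (snd (obs n d \<theta> (\<lambda>_. \<sigma>) \<pi> \<omega>) i) = sqrt (dsq d \<theta> \<sigma> \<pi> \<omega> i j)"
  unfolding vdist_def dsq_def obs_def using assms by (auto intro!: arg_cong[where f=sqrt] sum.cong)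

lemma obs_space: "obs n d \<theta> \<sigma> \<pi> \<omega> \<in> space (data_space n d)"
  by (simp add: data_space_def obs_def space_pair_measure space_PiM)

lemma dsq_meas:
  assumes "i < n" "j < n" "\<pi> i < n"
  shows "(\<lambda>\<omega>. dsq d \<theta> \<sigma> \<pi> \<omega> i j) \<in> borel_measurable (noise n d)"
proof -
  have [measurable]: "\<And>k. k \<in> {..<d} \<Longrightarrow> (\<lambda>\<omega>. fst \<omega> j k) \<in> borel_measurable (noise n d)"
    "\<And>k. k \<in> {..<d} \<Longrightarrow> (\<lambda>\<omega>. snd \<omega> i k) \<in> borel_measurable (noise n d)"
    using assms by (auto intro: noise_fst noise_snd)
  show ?thesis unfolding dsq_def by measurable
qed

lemma sqdiff: "(c*a)^2 - (c*b)^2 = (c::real)^2*(a^2 - b^2)"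
  by (simp add: power_mult_distrib algebra_simps)

lemma pair_bad:
  assumes ij: "i < n" "j < n" "\<pi> i < n" "j \<noteq> \<pi> i" and sg: "\<sigma> > 0" and s: "0 < s" "s \<le> 1/8"
  shows "emeasure (noise n d) {\<omega>\<in>space (noise n d). dsq d \<theta> \<sigma> \<pi> \<omega> i j - dsq d \<theta> \<sigma> \<pi> \<omega> i (\<pi> i) \<le> 0}
    \<le> ennreal (exp (8 * real d * s^2 - s * (\<Sum>k<d. ((\<theta> j k - \<theta> (\<pi> i) k)/\<sigma>)^2) / 2))"
proof -
  define m where "m = \<pi> i"
  define r where "r = (\<lambda>k. (\<theta> j k - \<theta> m k)/\<sigma>)"
  have F: "(\<lambda>\<omega>. dsq d \<theta> \<sigma> \<pi> \<omega> i j - dsq d \<theta> \<sigma> \<pi> \<omega> i (\<pi> i)) \<in> borel_measurable (noise n d)"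
    using dsq_meas[of i n j \<pi>] dsq_meas[of i n "\<pi> i" \<pi>] ij by measurable
  have "emeasure (noise n d) {\<omega>\<in>space (noise n d). dsq d \<theta> \<sigma> \<pi> \<omega> i j - dsq d \<theta> \<sigma> \<pi> \<omega> i (\<pi> i) \<le> 0}
     \<le> (\<integral>\<^sup>+\<omega>. ennreal (exp (-(s/\<sigma>^2) * (dsq d \<theta> \<sigma> \<pi> \<omega> i j - dsq d \<theta> \<sigma> \<pi> \<omega> i (\<pi> i)))) \<partial>noise n d)"
    by (rule markov_exp[OF F]) (use s sg in simp)
  also have "\<dots> = (\<integral>\<^sup>+\<omega>. (\<Prod>k<d. ennreal (exp (- s*((r k + fst \<omega> j k - snd \<omega> i k)^2 - (fst \<omega> m k - snd \<omega> i k)^2)))) \<partial>noise n d)"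
  proof (rule nn_integral_cong)
    fix \<omega>
    have tm: "(\<theta> j k + \<sigma> * fst \<omega> j k - (\<theta> m k + \<sigma> * snd \<omega> i k))^2 - (\<theta> m k + \<sigma> * fst \<omega> m k - (\<theta> m k + \<sigma> * snd \<omega> i k))^2
        = \<sigma>^2 * ((r k + fst \<omega> j k - snd \<omega> i k)^2 - (fst \<omega> m k - snd \<omega> i k)^2)" for k
    proof -
      have "\<theta> j k - \<theta> m k = \<sigma> * r k" unfolding r_def using sg by simp
      hence e1: "\<theta> j k + \<sigma> * fst \<omega> j k - (\<theta> m k + \<sigma> * snd \<omega> i k) = \<sigma> * (r k + fst \<omega> j k - snd \<omega> i k)"
        by (simp add: algebra_simps)
      have e2: "\<theta> m k + \<sigma> * fst \<omega> m k - (\<theta> m k + \<sigma> * snd \<omega> i k) = \<sigma> * (fst \<omega> m k - snd \<omega> i k)"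
        by (simp add: algebra_simps)
      show ?thesis unfolding e1 e2 by (rule sqdiff)
    qed
    have "-(s/\<sigma>^2) * (dsq d \<theta> \<sigma> \<pi> \<omega> i j - dsq d \<theta> \<sigma> \<pi> \<omega> i (\<pi> i))
        = (\<Sum>k<d. - s*((r k + fst \<omega> j k - snd \<omega> i k)^2 - (fst \<omega> m k - snd \<omega> i k)^2))"
    proof -
      have "dsq d \<theta> \<sigma> \<pi> \<omega> i j - dsq d \<theta> \<sigma> \<pi> \<omega> i (\<pi> i)
          = (\<Sum>k<d. \<sigma>^2 * ((r k + fst \<omega> j k - snd \<omega> i k)^2 - (fst \<omega> m k - snd \<omega> i k)^2))"
        unfolding dsq_def m_def[symmetric] sum_subtractf[symmetric] by (rule sum.cong[OF refl]) (rule tm)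
      thus ?thesis using sg by (simp add: sum_distrib_left)
    qed
    thus "ennreal (exp (-(s/\<sigma>^2) * (dsq d \<theta> \<sigma> \<pi> \<omega> i j - dsq d \<theta> \<sigma> \<pi> \<omega> i (\<pi> i))))
        = (\<Prod>k<d. ennreal (exp (- s*((r k + fst \<omega> j k - snd \<omega> i k)^2 - (fst \<omega> m k - snd \<omega> i k)^2))))"
      by (simp add: exp_sum prod_ennreal)
  qed
  also have "\<dots> \<le> ennreal (exp (8 * real d * s^2 - s * (\<Sum>k<d. (r k)^2) / 2))"
    by (rule pair_int) (use ij s in \<open>auto simp: m_def\<close>)
  finally show ?thesis unfolding r_def m_def .
qed

lemma zero_bad:
  assumes ij: "i < n" "j < n" "\<pi> i < n" "j \<noteq> \<pi> i" and sg: "\<sigma> > 0" and t: "0 < t" and d: "1 \<le> d"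
  shows "emeasure (noise n d) {\<omega>\<in>space (noise n d). dsq d \<theta> \<sigma> \<pi> \<omega> i (\<pi> i) \<le> 0} \<le> ennreal (1 / sqrt (1 + 2*t))"
proof -
  define m where "m = \<pi> i"
  have F: "(\<lambda>\<omega>. dsq d \<theta> \<sigma> \<pi> \<omega> i (\<pi> i)) \<in> borel_measurable (noise n d)"
    using dsq_meas[of i n "\<pi> i" \<pi>] ij by simp
  have "emeasure (noise n d) {\<omega>\<in>space (noise n d). dsq d \<theta> \<sigma> \<pi> \<omega> i (\<pi> i) \<le> 0}
     \<le> (\<integral>\<^sup>+\<omega>. ennreal (exp (-(t/\<sigma>^2) * dsq d \<theta> \<sigma> \<pi> \<omega> i (\<pi> i))) \<partial>noise n d)"
    by (rule markov_exp[OF F]) (use t sg in simp)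
  also have "\<dots> = (\<integral>\<^sup>+\<omega>. (\<Prod>k<d. ennreal (exp (-t*(fst \<omega> m k - snd \<omega> i k)^2))) \<partial>noise n d)"
  proof (rule nn_integral_cong)
    fix \<omega>
    have "-(t/\<sigma>^2) * dsq d \<theta> \<sigma> \<pi> \<omega> i (\<pi> i) = (\<Sum>k<d. -t*(fst \<omega> m k - snd \<omega> i k)^2)"
    proof -
      have "dsq d \<theta> \<sigma> \<pi> \<omega> i (\<pi> i) = (\<Sum>k<d. \<sigma>^2 * (fst \<omega> m k - snd \<omega> i k)^2)"
        unfolding dsq_def m_def[symmetric]
        by (rule sum.cong) (simp_all add: power_mult_distrib[symmetric] algebra_simps)
      thus ?thesis using sg by (simp add: sum_distrib_left)
    qed
    thus "ennreal (exp (-(t/\<sigma>^2) * dsq d \<theta> \<sigma> \<pi> \<omega> i (\<pi> i))) = (\<Prod>k<d. ennreal (exp (-t*(fst \<omega> m k - snd \<omega> i k)^2)))"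
      by (simp add: exp_sum prod_ennreal)
  qed
  also have "\<dots> \<le> ennreal (1 / sqrt (1 + 2*t))"
    by (rule zero_int[OF ij(2) _ ij(1) _ t d]) (use ij in \<open>auto simp: m_def\<close>)
  finally show ?thesis .
qed



lemma le0_sets: "f \<in> borel_measurable M \<Longrightarrow> {\<omega>\<in>space M. f \<omega> \<le> (0::real)} \<in> sets M"
  by (rule borel_measurable_le) simp_all

lemma powr4: "0 < (x::real) \<Longrightarrow> (x powr (1/4))^4 = x"
proof -
  assume x: "0 < x"
  have "(x powr (1/4))^4 = (x powr (1/4)) powr (real 4)"
    by (rule powr_realpow[symmetric]) (use x in simp)
  also have "\<dots> = x" using x by (simp add: powr_powr)
  finally show ?thesis .
qed

theorem theorem1:
  fixes n d :: nat and \<sigma> \<alpha> :: real and est :: "data \<Rightarrow> nat \<Rightarrow> nat"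
  assumes "n \<ge> 2" and "d \<ge> 1" and "\<sigma> > 0" and "0 < \<alpha>" and "\<alpha> < 1"
    and est_meas: "est \<in> measurable (data_space n d) (count_space UNIV)"
    and est_def: "(\<forall>D \<in> space (data_space n d). is_greedy n d D (est D))
              \<or> (\<forall>D \<in> space (data_space n d). is_LSS n d D (est D))
              \<or> (\<forall>D \<in> space (data_space n d). is_LSNS n d (\<lambda>_. \<sigma>) (\<lambda>_. \<sigma>) D (est D))
              \<or> (\<forall>D \<in> space (data_space n d). is_LSL n d D (est D))"
  shows "perc_sep n d (\<lambda>_. \<sigma>) \<alpha> est \<le>
    ereal (4 * max (sqrt (2 * ln (8 * real n ^ 2 / \<alpha>)))
                   ((real d * ln (4 * real n ^ 2 / \<alpha>)) powr (1/4)))"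
proof -
  note n = assms(1) and dd = assms(2) and sg = assms(3) and al = assms(4,5)
  define q where "q = real n ^ 2 / \<alpha>"
  define L0 where "L0 = ln q"
  define L1 where "L1 = ln (8 * real n ^ 2 / \<alpha>)"
  define L2 where "L2 = ln (4 * real n ^ 2 / \<alpha>)"
  define B where "B = 4 * max (sqrt (2 * L1)) ((real d * L2) powr (1/4))"
  have n4: "4 \<le> real n ^ 2"
  proof -
    have "2 \<le> real n" using n by simp
    hence "2^2 \<le> real n ^ 2" by (intro power_mono) auto
    thus ?thesis by simp
  qed
  have q1: "1 < q" unfolding q_def using n4 al by (simp add: field_simps)
  have L0p: "0 < L0" unfolding L0_def using q1 by simp
  have L01: "L0 \<le> L1" unfolding L0_def L1_def q_def using q1 al n4 n
    by (intro ln_mono) (auto simp: q_def field_simps)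
  have L02: "L0 \<le> L2" unfolding L0_def L2_def q_def using q1 al n4 n
    by (intro ln_mono) (auto simp: q_def field_simps)
  have B1: "32 * L1 \<le> B^2"
  proof -
    have L1n: "0 \<le> L1" using L01 L0p by simp
    have a: "4 * sqrt (2 * L1) \<le> B" unfolding B_def by simp
    have "(4 * sqrt (2 * L1))^2 \<le> B^2" by (rule power_mono[OF a]) (use L1n in simp)
    moreover have "(4 * sqrt (2 * L1))^2 = 32 * L1"
    proof -
      have "0 \<le> L1" using L01 L0p by simp
      thus ?thesis by (simp add: power_mult_distrib)
    qed
    ultimately show ?thesis by simp
  qed
  have dL2: "0 < real d * L2" using dd L02 L0p by simp
  have B2: "256 * real d * L2 \<le> B^4"
  proof -
    have a: "4 * (real d * L2) powr (1/4) \<le> B" unfolding B_def by simp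
    have "(4 * (real d * L2) powr (1/4))^4 \<le> B^4" by (rule power_mono[OF a]) simp
    moreover have "(4 * (real d * L2) powr (1/4))^4 = 256 * (real d * L2)"
      using powr4[OF dL2] by (simp add: power_mult_distrib)
    ultimately show ?thesis by simp
  qed
  have Bpos: "0 < B"
  proof -
    have "0 < (real d * L2) powr (1/4)" using dL2 by (rule powr_gt_zero[THEN iffD2, OF less_imp_neq[symmetric]])
    hence "0 < 4 * (real d * L2) powr (1/4)" by simp
    moreover have "4 * (real d * L2) powr (1/4) \<le> B" unfolding B_def by simp
    ultimately show ?thesis by linarith
  qed
  have cond: "\<forall>\<pi>. \<pi> permutes {..<n} \<longrightarrow>
               (\<forall>\<theta>. rel_sep n d \<theta> (\<lambda>_. \<sigma>) > B \<longrightarrow> err_prob n d est \<theta> (\<lambda>_. \<sigma>) \<pi> \<le> \<alpha>)"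
  proof (intro allI impI)
    fix \<pi> :: "nat \<Rightarrow> nat" and \<theta> :: vecs
    assume pi: "\<pi> permutes {..<n}" and rs: "B < rel_sep n d \<theta> (\<lambda>_. \<sigma>)"
    have piin: "\<And>i. i < n \<Longrightarrow> \<pi> i < n" using permutes_in_image[OF pi] by simp
    define Sset where "Sset = {vdist d (\<theta> i) (\<theta> j) / sqrt (((\<lambda>_. \<sigma>) i)^2 + ((\<lambda>_. \<sigma>) j)^2) | i j. i < n \<and> j < n \<and> i \<noteq> j}"
    have finS: "finite Sset"
    proof (rule finite_subset)
      show "Sset \<subseteq> (\<lambda>(i,j). vdist d (\<theta> i) (\<theta> j) / sqrt (\<sigma>^2 + \<sigma>^2)) ` ({..<n} \<times> {..<n})"
        unfolding Sset_def by auto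
    qed simp
    have neS: "Sset \<noteq> {}"
    proof -
      have "vdist d (\<theta> 0) (\<theta> 1) / sqrt (\<sigma>^2 + \<sigma>^2) \<in> Sset"
        unfolding Sset_def mem_Collect_eq
        by (rule exI[of _ "0::nat"], rule exI[of _ "1::nat"]) (use n in simp)
      thus ?thesis by blast
    qed
    have sep: "\<And>j m. j < n \<Longrightarrow> m < n \<Longrightarrow> j \<noteq> m \<Longrightarrow> B < vdist d (\<theta> j) (\<theta> m) / sqrt (\<sigma>^2 + \<sigma>^2)"
    proof -
      fix j m assume jm: "j < n" "m < n" "j \<noteq> m"
      have "B < Min Sset" using rs unfolding rel_sep_def Sset_def by simp
      hence "\<forall>a\<in>Sset. B < a" using finS neS by simp
      moreover have "vdist d (\<theta> j) (\<theta> m) / sqrt (\<sigma>^2 + \<sigma>^2) \<in> Sset" unfolding Sset_def using jm by auto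
      ultimately show "B < vdist d (\<theta> j) (\<theta> m) / sqrt (\<sigma>^2 + \<sigma>^2)" by blast
    qed
    define Bad where "Bad = (\<lambda>i j. if j = \<pi> i then {\<omega>\<in>space (noise n d). dsq d \<theta> \<sigma> \<pi> \<omega> i (\<pi> i) \<le> 0}
        else {\<omega>\<in>space (noise n d). dsq d \<theta> \<sigma> \<pi> \<omega> i j - dsq d \<theta> \<sigma> \<pi> \<omega> i (\<pi> i) \<le> 0})"
    have Bad_sets: "Bad i j \<in> sets (noise n d)" if ij: "i < n" "j < n" for i j
    proof -
      have m1: "(\<lambda>\<omega>. dsq d \<theta> \<sigma> \<pi> \<omega> i j) \<in> borel_measurable (noise n d)"
        by (rule dsq_meas) (use ij piin in auto)
      have m2: "(\<lambda>\<omega>. dsq d \<theta> \<sigma> \<pi> \<omega> i (\<pi> i)) \<in> borel_measurable (noise n d)"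
        by (rule dsq_meas) (use ij piin in auto)
      have m3: "(\<lambda>\<omega>. dsq d \<theta> \<sigma> \<pi> \<omega> i j - dsq d \<theta> \<sigma> \<pi> \<omega> i (\<pi> i)) \<in> borel_measurable (noise n d)"
        using m1 m2 by measurable
      show ?thesis unfolding Bad_def using le0_sets[OF m2] le0_sets[OF m3] by simp
    qed
    have Bad_bd: "emeasure (noise n d) (Bad i j) \<le> ennreal (\<alpha> / real n ^ 2)" if ij: "i < n" "j < n" for i j
    proof (cases "j = \<pi> i")
      case True
      define j' where "j' = (if \<pi> i = 0 then 1 else (0::nat))"
      have j': "j' < n" "j' \<noteq> \<pi> i" unfolding j'_def using n by auto
      define t where "t = q^2 / 2"
      have t: "0 < t" unfolding t_def using q1 by simp
      have "emeasure (noise n d) (Bad i j) \<le> ennreal (1 / sqrt (1 + 2*t))"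
        unfolding Bad_def using True zero_bad[where \<pi>=\<pi> and \<theta>=\<theta>, OF ij(1) j'(1) piin[OF ij(1)] j'(2) sg t dd] by simp
      also have "\<dots> \<le> ennreal (\<alpha> / real n ^ 2)"
      proof (rule ennreal_leI)
        have "q \<le> sqrt (1 + 2*t)"
        proof -
          have "sqrt (q^2) \<le> sqrt (1 + 2*t)" unfolding t_def by (intro real_sqrt_le_mono) simp
          thus ?thesis using q1 by simp
        qed
        hence "1 / sqrt (1 + 2*t) \<le> 1 / q" using q1 t by (intro divide_left_mono) (auto intro!: mult_pos_pos)
        also have "1 / q = \<alpha> / real n ^ 2" unfolding q_def by simp
        finally show "1 / sqrt (1 + 2*t) \<le> \<alpha> / real n ^ 2" .
      qed
      finally show ?thesis .
    next
      case False
      define m where "m = \<pi> i"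
      have m: "m < n" "j \<noteq> m" unfolding m_def using False piin ij by auto
      define V where "V = (\<Sum>k<d. (\<theta> j k - \<theta> m k)^2)"
      define R where "R = (\<Sum>k<d. ((\<theta> j k - \<theta> m k)/\<sigma>)^2)"
      have RV: "R = V / \<sigma>^2" unfolding R_def V_def by (simp add: power_divide sum_divide_distrib)
      have V0: "0 \<le> V" unfolding V_def by (simp add: sum_nonneg)
      have sB: "B < sqrt V / (\<sigma> * sqrt 2)"
      proof -
        have "sqrt (\<sigma>^2 + \<sigma>^2) = \<sigma> * sqrt 2" using sg by (simp add: real_sqrt_mult mult_2[symmetric])
        thus ?thesis using sep[OF ij(2) m(1) m(2)] unfolding vdist_def V_def by simp
      qed
      have "B * (\<sigma> * sqrt 2) < sqrt V" using sB sg by (simp add: pos_less_divide_eq)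
      hence "(B * (\<sigma> * sqrt 2))^2 < (sqrt V)^2" using Bpos sg by (intro power_strict_mono) auto
      hence "2 * B^2 * \<sigma>^2 < V" using V0 by (simp add: power_mult_distrib)
      hence R2: "2 * B^2 < R" unfolding RV using sg by (simp add: pos_less_divide_eq)
      obtain s where s: "0 < s" "s \<le> 1/8" "8 * real d * s^2 - s * R / 2 \<le> -L0"
        using expo_bound[where d="real d" and Rr=R and B=B and La=L0 and Lb=L1 and Lc=L2] dd R2 B1 B2 L01 L02 L0p by auto
      have "emeasure (noise n d) (Bad i j) \<le> ennreal (exp (8 * real d * s^2 - s * R / 2))"
        unfolding Bad_def R_def m_def using False pair_bad[where \<pi>=\<pi> and \<theta>=\<theta>, OF ij(1) ij(2) piin[OF ij(1)] False sg s(1) s(2)] by simp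
      also have "\<dots> \<le> ennreal (exp (-L0))" using s(3) by (intro ennreal_leI) simp
      also have "exp (-L0) = \<alpha> / real n ^ 2" unfolding L0_def using q1 by (simp add: exp_minus q_def)
      finally show ?thesis .
    qed
    have subset: "{\<omega>\<in>space (noise n d). est (obs n d \<theta> (\<lambda>_. \<sigma>) \<pi> \<omega>) \<noteq> \<pi>} \<subseteq> (\<Union>p\<in>{..<n}\<times>{..<n}. Bad (fst p) (snd p))"
    proof
      fix \<omega> assume w: "\<omega> \<in> {\<omega>\<in>space (noise n d). est (obs n d \<theta> (\<lambda>_. \<sigma>) \<pi> \<omega>) \<noteq> \<pi>}"
      show "\<omega> \<in> (\<Union>p\<in>{..<n}\<times>{..<n}. Bad (fst p) (snd p))"
      proof (rule ccontr)
        assume nb: "\<omega> \<notin> (\<Union>p\<in>{..<n}\<times>{..<n}. Bad (fst p) (snd p))"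
        have nb': "\<And>i j. i < n \<Longrightarrow> j < n \<Longrightarrow> \<omega> \<notin> Bad i j" using nb by force
        define D where "D = obs n d \<theta> (\<lambda>_. \<sigma>) \<pi> \<omega>"
        have Dsp: "D \<in> space (data_space n d)" unfolding D_def by (rule obs_space)
        have sep': "\<forall>i<n. \<forall>j<n. j \<noteq> \<pi> i \<longrightarrow> vdist d (fst D (\<pi> i)) (snd D i) < vdist d (fst D j) (snd D i)"
        proof (intro allI impI)
          fix i j assume ij: "i < n" "j < n" "j \<noteq> \<pi> i"
          have "\<omega> \<notin> Bad i j" using nb' ij by simp
          hence "dsq d \<theta> \<sigma> \<pi> \<omega> i (\<pi> i) < dsq d \<theta> \<sigma> \<pi> \<omega> i j" using w ij(3) unfolding Bad_def by auto
          thus "vdist d (fst D (\<pi> i)) (snd D i) < vdist d (fst D j) (snd D i)"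
            unfolding D_def using vdist_obs[OF ij(1) piin[OF ij(1)]] vdist_obs[OF ij(1) ij(2)] by simp
        qed
        have pos: "\<forall>i<n. 0 < vdist d (fst D (\<pi> i)) (snd D i)"
        proof (intro allI impI)
          fix i assume i: "i < n"
          have "\<omega> \<notin> Bad i (\<pi> i)" using nb' i piin by simp
          hence "0 < dsq d \<theta> \<sigma> \<pi> \<omega> i (\<pi> i)" using w unfolding Bad_def by auto
          thus "0 < vdist d (fst D (\<pi> i)) (snd D i)"
            unfolding D_def using vdist_obs[OF i piin[OF i]] by simp
        qed
        have disj: "is_greedy n d D (est D) \<or> is_LSS n d D (est D) \<or> is_LSNS n d (\<lambda>_. \<sigma>) (\<lambda>_. \<sigma>) D (est D) \<or> is_LSL n d D (est D)"
          using est_def Dsp by blast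
        have pe: "est D permutes {..<n}"
          using disj unfolding is_greedy_def is_LSS_def is_LSNS_def is_LSL_def by blast
        have "est D = \<pi>" by (rule all_estimators_eq[OF pe pi sg sep' pos disj])
        thus False using w unfolding D_def by simp
      qed
    qed
    have U: "(\<Union>p\<in>{..<n}\<times>{..<n}. Bad (fst p) (snd p)) \<in> sets (noise n d)"
      using Bad_sets by (intro sets.finite_UN) auto
    have "emeasure (noise n d) {\<omega>\<in>space (noise n d). est (obs n d \<theta> (\<lambda>_. \<sigma>) \<pi> \<omega>) \<noteq> \<pi>}
        \<le> emeasure (noise n d) (\<Union>p\<in>{..<n}\<times>{..<n}. Bad (fst p) (snd p))"
      by (rule emeasure_mono[OF subset U])
    also have "\<dots> \<le> (\<Sum>p\<in>{..<n}\<times>{..<n}. emeasure (noise n d) (Bad (fst p) (snd p)))"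
      by (rule emeasure_subadditive_finite) (use Bad_sets in auto)
    also have "\<dots> \<le> (\<Sum>p\<in>{..<n}\<times>{..<n}. ennreal (\<alpha> / real n ^ 2))"
      by (rule sum_mono) (use Bad_bd in auto)
    also have "\<dots> = ennreal \<alpha>"
    proof -
      have "(\<Sum>p\<in>{..<n}\<times>{..<n}. ennreal (\<alpha> / real n ^ 2)) = ennreal (real (n*n) * (\<alpha> / real n ^ 2))"
      proof -
        have "(\<Sum>p\<in>{..<n}\<times>{..<n}. ennreal (\<alpha> / real n ^ 2)) = of_nat (n*n) * ennreal (\<alpha> / real n ^ 2)"
          by (simp add: card_cartesian_product)
        also have "\<dots> = ennreal (real (n*n)) * ennreal (\<alpha> / real n ^ 2)"
          by (simp only: ennreal_of_nat_eq_real_of_nat)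
        also have "\<dots> = ennreal (real (n*n) * (\<alpha> / real n ^ 2))"
          by (rule ennreal_mult[symmetric]) (use al in auto)
        finally show ?thesis .
      qed
      also have "real (n*n) * (\<alpha> / real n ^ 2) = \<alpha>" using n by (simp add: power2_eq_square)
      finally show ?thesis .
    qed
    finally have em: "emeasure (noise n d) {\<omega>\<in>space (noise n d). est (obs n d \<theta> (\<lambda>_. \<sigma>) \<pi> \<omega>) \<noteq> \<pi>} \<le> ennreal \<alpha>" .
    show "err_prob n d est \<theta> (\<lambda>_. \<sigma>) \<pi> \<le> \<alpha>"
    proof -
      have "err_prob n d est \<theta> (\<lambda>_. \<sigma>) \<pi> = enn2real (emeasure (noise n d) {\<omega>\<in>space (noise n d). est (obs n d \<theta> (\<lambda>_. \<sigma>) \<pi> \<omega>) \<noteq> \<pi>})"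
        unfolding err_prob_def measure_def ..
      also have "\<dots> \<le> enn2real (ennreal \<alpha>)" by (rule enn2real_mono[OF em]) simp
      also have "\<dots> = \<alpha>" using al by simp
      finally show ?thesis .
    qed
  qed
  have "perc_sep n d (\<lambda>_. \<sigma>) \<alpha> est \<le> ereal B"
    unfolding perc_sep_def by (rule Inf_lower) (use Bpos cond in blast)
  thus ?thesis unfolding B_def L1_def L2_def .
qed


end
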